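(* Given a set of $n$ trajectories in $\mathbb{R}^1$, each piecewise linear with vertices at times $t_0,\dots,t_\tau$, a central trajectory with $\varepsilon=0$ has worst-case complexity $O(\tau n^2)$.
   Context: Setting: $\mathcal{X}$ is a set of $n$ entities moving in $\mathbb{R}^1$ along piecewise-linear trajectories with vertices at the common times $t_0<\dots<t_\tau$, in general position (no three trajectories pass through the same point at the same time). With $\varepsilon=0$, a trajectoid is a function $\mathcal{T}:[t_0,t_\tau]\to\mathcal{X}$ that may switch from $\sigma$ to $\psi$ at time $t$ only if $\sigma(t)=\psi(t)$. $D(\sigma,t)=\max_{\psi\in\mathcal{X}}|\sigma(t)-\psi(t)|$. A central trajectory is a trajectoid minimizing $\int_{t_0}^{t_\tau}D(\mathcal{T}(t),t)\,dt$. The complexity of a trajectoid is the number of pieces of the curve $t\mapsto\mathcal{T}(t)(t)$, i.e. the number of maximal time intervals on which $\mathcal{T}$ is a single entity and that entity moves linearly. *)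

theory Defs
  imports "HOL-Analysis.Analysis"
begin

(* Entities are indices 0..n-1; entity k has trajectory f k :: real => real.
   Vertex times tt 0 < ... < tt tau; the time domain is {tt 0 .. tt tau}. *)

definition valid_input :: "nat \<Rightarrow> nat \<Rightarrow> (nat \<Rightarrow> real) \<Rightarrow> (nat \<Rightarrow> real \<Rightarrow> real) \<Rightarrow> bool" where
  "valid_input n \<tau> tt f \<longleftrightarrow>
     n \<ge> 1 \<and> \<tau> \<ge> 1 \<and>
     (\<forall>i<\<tau>. tt i < tt (Suc i)) \<and>
     \<comment> \<open>piecewise linear with vertices at the common times\<close>
     (\<forall>k<n. \<forall>i<\<tau>. \<exists>m c. \<forall>t\<in>{tt i..tt (Suc i)}. f k t = m * t + c) \<and>
     \<comment> \<open>a set of n entities: distinct trajectories\<close>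
     (\<forall>i<n. \<forall>j<n. i \<noteq> j \<longrightarrow> (\<exists>t\<in>{tt 0..tt \<tau>}. f i t \<noteq> f j t)) \<and>
     \<comment> \<open>general position: no three trajectories through the same point at the same time\<close>
     (\<forall>t\<in>{tt 0..tt \<tau>}. \<forall>i<n. \<forall>j<n. \<forall>k<n.
        i \<noteq> j \<and> j \<noteq> k \<and> i \<noteq> k \<longrightarrow> \<not> (f i t = f j t \<and> f j t = f k t))"

definition Dist :: "nat \<Rightarrow> (nat \<Rightarrow> real \<Rightarrow> real) \<Rightarrow> nat \<Rightarrow> real \<Rightarrow> real" where
  "Dist n f \<sigma> t = Max ((\<lambda>\<psi>. \<bar>f \<sigma> t - f \<psi> t\<bar>) ` {..<n})"

(* Trajectoid with epsilon = 0: T maps times to entities; near every time t, every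
   entity used by T is at time t at the same position as T t, i.e. T can only switch
   from sigma to psi at a time t with sigma(t) = psi(t). *)
definition trajectoid :: "nat \<Rightarrow> real \<Rightarrow> real \<Rightarrow> (nat \<Rightarrow> real \<Rightarrow> real) \<Rightarrow> (real \<Rightarrow> nat) \<Rightarrow> bool" where
  "trajectoid n a b f T \<longleftrightarrow>
     (\<forall>t\<in>{a..b}. T t < n \<and>
        (\<exists>\<delta>>0. \<forall>s\<in>{a..b}. \<bar>s - t\<bar> < \<delta> \<longrightarrow> f (T s) t = f (T t) t))"

definition traj_cost :: "nat \<Rightarrow> real \<Rightarrow> real \<Rightarrow> (nat \<Rightarrow> real \<Rightarrow> real) \<Rightarrow> (real \<Rightarrow> nat) \<Rightarrow> real" where
  "traj_cost n a b f T = integral {a..b} (\<lambda>t. Dist n f (T t) t)"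

definition central_trajectory :: "nat \<Rightarrow> real \<Rightarrow> real \<Rightarrow> (nat \<Rightarrow> real \<Rightarrow> real) \<Rightarrow> (real \<Rightarrow> nat) \<Rightarrow> bool" where
  "central_trajectory n a b f T \<longleftrightarrow>
     trajectoid n a b f T \<and>
     (\<forall>T'. trajectoid n a b f T' \<longrightarrow> traj_cost n a b f T \<le> traj_cost n a b f T')"

(* The complexity (number of maximal
   such intervals) is the least such k. *)
definition complexity_le :: "real \<Rightarrow> real \<Rightarrow> (nat \<Rightarrow> real \<Rightarrow> real) \<Rightarrow> (real \<Rightarrow> nat) \<Rightarrow> nat \<Rightarrow> bool" where
  "complexity_le a b f T k \<longleftrightarrow>
     (\<exists>s::nat \<Rightarrow> real. s 0 = a \<and> s k = b \<and> (\<forall>j<k. s j < s (Suc j)) \<and>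
        (\<forall>j<k. \<exists>e m c. \<forall>t\<in>{s j<..<s (Suc j)}. T t = e \<and> f e t = m * t + c))"

end

theory Submission
  imports Defs
begin


lemma finite_gap:
  fixes E :: "real set"
  assumes "finite E"
  shows "\<exists>g>0. \<forall>x\<in>E. x \<noteq> t \<longrightarrow> g \<le> \<bar>x - t\<bar>"
proof -
  let ?S = "insert 1 ((\<lambda>x. \<bar>x - t\<bar>) ` (E - {t}))"
  have fin: "finite ?S" using assms by simp
  have pos: "\<forall>y\<in>?S. y > 0" by auto
  have m: "Min ?S > 0" using fin pos by (simp add: Min_gr_iff)
  have "\<forall>x\<in>E. x \<noteq> t \<longrightarrow> Min ?S \<le> \<bar>x - t\<bar>"
  proof (intro ballI impI)
    fix x assume "x \<in> E" "x \<noteq> t"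
    then have "\<bar>x - t\<bar> \<in> ?S" by blast
    then show "Min ?S \<le> \<bar>x - t\<bar>" using fin by (rule Min_le[rotated])
  qed
  then show ?thesis using m by blast
qed

lemma Dist_pos: "f \<sigma> t = f \<sigma>' t \<Longrightarrow> Dist n f \<sigma> t = Dist n f \<sigma>' t"
  unfolding Dist_def by simp

context
  fixes n K :: nat and a b :: real and s :: "nat \<Rightarrow> real" and f :: "nat \<Rightarrow> real \<Rightarrow> real"
  assumes n1: "n \<ge> 1" and s0: "s 0 = a" and sK: "s K = b" and sinc: "\<forall>j<K. s j < s (Suc j)"
  and P: "\<forall>j<K. \<forall>u\<in>{s j<..<s (Suc j)}. \<forall>e1<n. \<forall>e2<n. f e1 u = f e2 u \<longrightarrow>
             (\<forall>v\<in>{s j..s (Suc j)}. f e1 v = f e2 v)"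
  and L: "\<forall>j<K. \<forall>e<n. \<exists>m c. \<forall>v\<in>{s j..s (Suc j)}. f e v = m * v + c"
begin

lemma smono: "i < j \<Longrightarrow> j \<le> K \<Longrightarrow> s i < s j"
proof (induction j)
  case 0 then show ?case by simp
next
  case (Suc j)
  have sj: "s j < s (Suc j)" using sinc Suc.prems by simp
  show ?case
  proof (cases "i = j")
    case True then show ?thesis using sj by simp
  next
    case False
    then have "s i < s j" using Suc by simp
    then show ?thesis using sj by simp
  qed
qed

lemma smono_le: "i \<le> j \<Longrightarrow> j \<le> K \<Longrightarrow> s i \<le> s j"
  using smono[of i j] by (cases "i = j") auto

lemma smono_iff: "i \<le> K \<Longrightarrow> j \<le> K \<Longrightarrow> s i < s j \<longleftrightarrow> i < j"
  using smono[of i j] smono_le[of j i] by (cases "i < j") auto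

definition "E = s ` {..K}"
definition "mid j = (s j + s (Suc j)) / 2"
definition "idx t = (THE j. j < K \<and> s j < t \<and> t < s (Suc j))"

lemma finE: "finite E" unfolding E_def by simp

lemma locate_aux: "s 0 \<le> t \<Longrightarrow> t < s k \<Longrightarrow> \<exists>j<k. s j \<le> t \<and> t < s (Suc j)"
proof (induction k)
  case 0 then show ?case by simp
next
  case (Suc k)
  then show ?case
    by (metis less_Suc_eq not_le)
qed

lemma locate: "t \<in> {a..b} \<Longrightarrow> t \<notin> E \<Longrightarrow> \<exists>j<K. s j < t \<and> t < s (Suc j)"
proof -
  assume t: "t \<in> {a..b}" "t \<notin> E"
  have "t \<noteq> b" using t sK unfolding E_def by force
  then have "t < s K" using t sK by auto
  then obtain j where "j < K" "s j \<le> t" "t < s (Suc j)" using locate_aux t s0 by auto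
  moreover have "s j \<noteq> t" using t \<open>j<K\<close> unfolding E_def by force
  ultimately show ?thesis by force
qed

lemma not_between: "j < K \<Longrightarrow> k \<le> K \<Longrightarrow> s j < s k \<Longrightarrow> s k < s (Suc j) \<Longrightarrow> False"
  using smono_iff[of j k] smono_iff[of k "Suc j"] by auto

lemma uniq: "j < K \<Longrightarrow> s j < t \<Longrightarrow> t < s (Suc j) \<Longrightarrow> j' < K \<Longrightarrow> s j' < t \<Longrightarrow> t < s (Suc j') \<Longrightarrow> j = j'"
proof (rule ccontr)
  assume a: "j < K" "s j < t" "t < s (Suc j)" "j' < K" "s j' < t" "t < s (Suc j')" "j \<noteq> j'"
  show False
  proof (cases "j < j'")
    case True
    then have "s (Suc j) \<le> s j'" using smono_le[of "Suc j" j'] a by auto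
    then show False using a by auto
  next
    case False
    then have "s (Suc j') \<le> s j" using smono_le[of "Suc j'" j] a by auto
    then show False using a by auto
  qed
qed

lemma idx_eq:
  assumes "j < K" "s j < t" "t < s (Suc j)" shows "idx t = j"
  unfolding idx_def
proof (rule the_equality)
  show "j < K \<and> s j < t \<and> t < s (Suc j)" using assms by simp
  fix j' assume "j' < K \<and> s j' < t \<and> t < s (Suc j')"
  then show "j' = j" using uniq[of j t j'] assms by simp
qed

lemma idx_props: "t \<in> {a..b} \<Longrightarrow> t \<notin> E \<Longrightarrow> idx t < K \<and> s (idx t) < t \<and> t < s (Suc (idx t))"
proof -
  assume "t \<in> {a..b}" "t \<notin> E"
  then obtain j where "j<K" "s j < t" "t < s (Suc j)" using locate by blast
  then show ?thesis using idx_eq[of j t] by simp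
qed

lemma interval_sub: "j < K \<Longrightarrow> {s j..s (Suc j)} \<subseteq> {a..b}"
  using smono_le[of 0 j] smono_le[of "Suc j" K] s0 sK by auto

lemma mid_in: "j < K \<Longrightarrow> mid j \<in> {s j<..<s (Suc j)}"
  using sinc unfolding mid_def by auto

lemma key:
  assumes T: "trajectoid n a b f T" and j: "j < K" and u: "u \<in> {s j<..<s (Suc j)}"
  shows "\<forall>v\<in>{s j..s (Suc j)}. f (T u) v = f (T (mid j)) v"
proof -
  let ?A = "{s j<..<s (Suc j)}"
  let ?I = "{s j..s (Suc j)}"
  define g where "g u = (\<lambda>v. if v \<in> ?I then f (T u) v else 0)" for u
  have AI: "?A \<subseteq> {a..b}" using interval_sub[OF j] by auto
  have "g u = g (mid j)"
  proof (rule connected_local_const[of ?A])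
    show "connected ?A" by simp
    show "u \<in> ?A" by fact
    show "mid j \<in> ?A" using mid_in[OF j] .
    show "\<forall>x\<in>?A. eventually (\<lambda>y. g x = g y) (at x within ?A)"
    proof
      fix x assume x: "x \<in> ?A"
      then have xab: "x \<in> {a..b}" using AI by auto
      with T obtain d where d: "d > 0" "\<forall>y\<in>{a..b}. \<bar>y - x\<bar> < d \<longrightarrow> f (T y) x = f (T x) x"
        and Tx: "T x < n"
        unfolding trajectoid_def by blast
      show "eventually (\<lambda>y. g x = g y) (at x within ?A)"
        unfolding eventually_at
      proof (intro exI[of _ d] conjI ballI impI)
        show "d > 0" by fact
        fix y assume y: "y \<in> ?A" "y \<noteq> x \<and> dist y x < d"
        then have yab: "y \<in> {a..b}" using AI by auto
        then have Ty: "T y < n" using T unfolding trajectoid_def by blast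
        have "f (T y) x = f (T x) x" using d y yab by (auto simp: dist_real_def)
        then have "\<forall>v\<in>?I. f (T y) v = f (T x) v" using P j x Tx Ty by blast
        then show "g x = g y" unfolding g_def by auto
      qed
    qed
  qed
  show ?thesis
  proof
    fix v assume v: "v \<in> ?I"
    have "g u v = g (mid j) v" using \<open>g u = g (mid j)\<close> by simp
    then show "f (T u) v = f (T (mid j)) v" using v unfolding g_def by simp
  qed
qed

lemma key_pt:
  assumes T: "trajectoid n a b f T" and "j < K" and "u \<in> {s j<..<s (Suc j)}"
  shows "f (T u) u = f (T (mid j)) u"
  using key[OF assms] assms(3) by auto

definition "nice T t = (if t \<in> E then T t else T (mid (idx t)))"

lemma Tlt: "trajectoid n a b f T \<Longrightarrow> t \<in> {a..b} \<Longrightarrow> T t < n"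
  unfolding trajectoid_def by blast

lemma nice_traj:
  assumes T: "trajectoid n a b f T"
  shows "trajectoid n a b f (nice T)"
  unfolding trajectoid_def
proof
  fix t assume t: "t \<in> {a..b}"
  show "nice T t < n \<and> (\<exists>\<delta>>0. \<forall>s'\<in>{a..b}. \<bar>s' - t\<bar> < \<delta> \<longrightarrow> f (nice T s') t = f (nice T t) t)"
  proof (cases "t \<in> E")
    case False
    from idx_props[OF t False] have j: "idx t < K" "s (idx t) < t" "t < s (Suc (idx t))" by auto
    let ?j = "idx t"
    have lt: "nice T t < n" unfolding nice_def using False Tlt[OF T] mid_in[OF j(1)] interval_sub[OF j(1)] by auto
    define d where "d = min (t - s ?j) (s (Suc ?j) - t)"
    have "d > 0" using j unfolding d_def by auto
    moreover have "\<forall>s'\<in>{a..b}. \<bar>s' - t\<bar> < d \<longrightarrow> f (nice T s') t = f (nice T t) t"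
    proof (intro ballI impI)
      fix s' assume s': "s' \<in> {a..b}" "\<bar>s' - t\<bar> < d"
      then have "s (idx t) < s'" "s' < s (Suc ?j)" unfolding d_def by auto
      then have "s' \<notin> E" "idx s' = ?j"
        using j idx_eq[of ?j s'] not_between[of ?j] by (auto simp: E_def)
      then show "f (nice T s') t = f (nice T t) t" unfolding nice_def using False by simp
    qed
    ultimately show ?thesis using lt by blast
  next
    case True
    have lt: "nice T t < n" unfolding nice_def using True Tlt[OF T t] by auto
    obtain g where g: "g > 0" "\<forall>x\<in>E. x \<noteq> t \<longrightarrow> g \<le> \<bar>x - t\<bar>" using finite_gap[OF finE] by blast
    obtain d0 where d0: "d0 > 0" "\<forall>y\<in>{a..b}. \<bar>y - t\<bar> < d0 \<longrightarrow> f (T y) t = f (T t) t"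
      using T t unfolding trajectoid_def by blast
    define d where "d = min g d0"
    have "d > 0" using g d0 unfolding d_def by auto
    moreover have "\<forall>s'\<in>{a..b}. \<bar>s' - t\<bar> < d \<longrightarrow> f (nice T s') t = f (nice T t) t"
    proof (intro ballI impI)
      fix s' assume s': "s' \<in> {a..b}" "\<bar>s' - t\<bar> < d"
      show "f (nice T s') t = f (nice T t) t"
      proof (cases "s' \<in> E")
        case True
        have "\<bar>s' - t\<bar> < g" using s'(2) unfolding d_def by simp
        then have "s' = t" using g(2)[rule_format, OF True] by (meson not_less)
        then show ?thesis by simp
      next
        case False
        from idx_props[OF s'(1) False] have j: "idx s' < K" "s (idx s') < s'" "s' < s (Suc (idx s'))" by auto
        let ?j = "idx s'"
        have E1: "s ?j \<in> E" "s (Suc ?j) \<in> E" using j(1) unfolding E_def by auto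
        have tI: "t \<in> {s ?j..s (Suc ?j)}"
        proof (rule ccontr)
          assume "t \<notin> {s ?j..s (Suc ?j)}"
          then have "t < s ?j \<or> t > s (Suc ?j)" by auto
          then show False
          proof
            assume "t < s ?j"
            then have "\<bar>s ?j - t\<bar> < g" using s' j unfolding d_def by auto
            moreover have "s ?j \<noteq> t" using \<open>t < s ?j\<close> by simp
            ultimately show False using g(2)[rule_format, OF E1(1)] by simp
          next
            assume "t > s (Suc ?j)"
            then have "\<bar>s (Suc ?j) - t\<bar> < g" using s' j unfolding d_def by auto
            moreover have "s (Suc ?j) \<noteq> t" using \<open>t > s (Suc ?j)\<close> by simp
            ultimately show False using g(2)[rule_format, OF E1(2)] by simp
          qed
        qed
        have 1: "f (T s') t = f (T t) t" using d0 s' unfolding d_def by auto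
        have 2: "f (T s') t = f (T (mid ?j)) t" using key[OF T j(1)] j tI by auto
        show ?thesis unfolding nice_def using False True 1 2 by simp
      qed
    qed
    ultimately show ?thesis using lt by blast
  qed
qed

lemma nice_cost:
  assumes T: "trajectoid n a b f T"
  shows "traj_cost n a b f (nice T) = traj_cost n a b f T"
  unfolding traj_cost_def
proof (rule integral_spike[of E])
  show "negligible E" using finE by auto
  fix t assume t: "t \<in> {a..b} - E"
  from idx_props t have j: "idx t < K" "s (idx t) < t" "t < s (Suc (idx t))" by auto
  show "Dist n f (T t) t = Dist n f (nice T t) t"
    using key_pt[OF T j(1)] j t unfolding nice_def by (auto intro: Dist_pos)
qed

lemma cost_repr:
  assumes T: "trajectoid n a b f T"
  shows "traj_cost n a b f T \<in>
    (\<lambda>c. integral {a..b} (\<lambda>t. Dist n f (c (idx t)) t)) ` (PiE {..<K} (\<lambda>_. {..<n}))"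
proof -
  let ?c = "restrict (\<lambda>j. T (mid j)) {..<K}"
  have lt: "T (mid j) < n" if "j < K" for j
  proof -
    have "mid j \<in> {a..b}" using mid_in[OF that] interval_sub[OF that] by auto
    then show ?thesis using Tlt[OF T] by blast
  qed
  have cP: "?c \<in> PiE {..<K} (\<lambda>_. {..<n})"
    using lt by (simp add: restrict_PiE_iff)
  have eq: "traj_cost n a b f T = integral {a..b} (\<lambda>t. Dist n f (?c (idx t)) t)"
    unfolding traj_cost_def
  proof (rule integral_spike[of E])
    show "negligible E" using finE by auto
    fix t assume t: "t \<in> {a..b} - E"
    from idx_props t have j: "idx t < K" "s (idx t) < t" "t < s (Suc (idx t))" by auto
    show "Dist n f (?c (idx t)) t = Dist n f (T t) t"
      using key_pt[OF T j(1)] j t by (auto intro: Dist_pos)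
  qed
  show ?thesis using eq cP by blast
qed

lemma nice_complexity:
  assumes T: "trajectoid n a b f T"
  shows "complexity_le a b f (nice T) K"
  unfolding complexity_le_def
proof (intro exI[of _ s] conjI)
  show "s 0 = a" using s0 by simp
  show "s K = b" using sK by simp
  show "\<forall>j<K. s j < s (Suc j)" using sinc by auto
  show "\<forall>j<K. \<exists>e m c. \<forall>t\<in>{s j<..<s (Suc j)}. nice T t = e \<and> f e t = m * t + c"
  proof (intro allI impI)
    fix j assume j: "j < K"
    have Tm: "T (mid j) < n" using Tlt[OF T] mid_in[OF j] interval_sub[OF j] by auto
    obtain m c where mc: "\<forall>v\<in>{s j..s (Suc j)}. f (T (mid j)) v = m * v + c" using L j Tm by blast
    show "\<exists>e m c. \<forall>t\<in>{s j<..<s (Suc j)}. nice T t = e \<and> f e t = m * t + c"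
    proof (rule exI[of _ "T (mid j)"], rule exI[of _ m], rule exI[of _ c], intro ballI conjI)
      fix t assume t: "t \<in> {s j<..<s (Suc j)}"
      have "t \<notin> E" using t j not_between[of j] unfolding E_def by auto
      then show "nice T t = T (mid j)" unfolding nice_def using idx_eq[OF j] t by auto
      show "f (T (mid j)) t = m * t + c" using mc t by auto
    qed
  qed
qed

lemma abstract_main:
  "\<exists>T. central_trajectory n a b f T \<and> complexity_le a b f T K"
proof -
  define S where "S = traj_cost n a b f ` {T. trajectoid n a b f T}"
  define F where "F = (\<lambda>c. integral {a..b} (\<lambda>t. Dist n f (c (idx t)) t))"
  have sub: "S \<subseteq> F ` (PiE {..<K} (\<lambda>_. {..<n}))"
  proof
    fix x assume "x \<in> S"
    then obtain T where "trajectoid n a b f T" "x = traj_cost n a b f T" unfolding S_def by (auto elim!: imageE)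
    then show "x \<in> F ` (PiE {..<K} (\<lambda>_. {..<n}))" using cost_repr unfolding F_def by simp
  qed
  have fin: "finite S"
    by (rule finite_subset[OF sub]) (intro finite_imageI finite_PiE; simp)
  have t0: "trajectoid n a b f (\<lambda>_. 0)" using n1 unfolding trajectoid_def by (auto intro: exI[of _ "1::real"])
  then have ne: "S \<noteq> {}" unfolding S_def by auto
  have "Min S \<in> S" using fin ne by (rule Min_in)
  then obtain T0 where T0: "trajectoid n a b f T0" "traj_cost n a b f T0 = Min S"
    by (metis (no_types, lifting) S_def imageE mem_Collect_eq)
  have minT0: "\<forall>T'. trajectoid n a b f T' \<longrightarrow> traj_cost n a b f T0 \<le> traj_cost n a b f T'"
  proof (intro allI impI)
    fix T' assume "trajectoid n a b f T'"
    then have "traj_cost n a b f T' \<in> S" unfolding S_def by simp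
    then have "Min S \<le> traj_cost n a b f T'" using fin by (rule Min_le[rotated])
    then show "traj_cost n a b f T0 \<le> traj_cost n a b f T'" using T0(2) by simp
  qed
  have "central_trajectory n a b f (nice T0)"
    unfolding central_trajectory_def
    using nice_traj[OF T0(1)] nice_cost[OF T0(1)] minT0 by simp
  then show ?thesis using nice_complexity[OF T0(1)] by blast
qed

end




lemma tt_mono:
  assumes "\<forall>i<\<tau>. (tt::nat\<Rightarrow>real) i < tt (Suc i)"
  shows "i < j \<Longrightarrow> j \<le> \<tau> \<Longrightarrow> tt i < tt j"
proof (induction j)
  case 0 then show ?case by simp
next
  case (Suc j)
  have sj: "tt j < tt (Suc j)" using assms Suc.prems by simp
  show ?case
  proof (cases "i = j")
    case True then show ?thesis using sj by simp
  next
    case False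
    then have "tt i < tt j" using Suc by simp
    then show ?thesis using sj by simp
  qed
qed

lemma lin_two_points:
  fixes m1 c1 m2 c2 x y :: real
  assumes "m1 * x + c1 = m2 * x + c2" "m1 * y + c1 = m2 * y + c2" "x \<noteq> y"
  shows "m1 = m2 \<and> c1 = c2"
proof -
  have "(m1 - m2) * (x - y) = 0" using assms(1,2) by (simp add: algebra_simps)
  then have "m1 = m2" using assms(3) by simp
  then show ?thesis using assms(1) by simp
qed

lemma concrete:
  assumes V: "valid_input n \<tau> tt f"
  shows "\<exists>K s. s 0 = tt 0 \<and> s K = tt \<tau> \<and> (\<forall>j<K. s j < s (Suc j)) \<and>
     (\<forall>j<K. \<forall>u\<in>{s j<..<s (Suc j)}. \<forall>e1<n. \<forall>e2<n. f e1 u = f e2 u \<longrightarrow>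
             (\<forall>v\<in>{s j..s (Suc j)}. f e1 v = f e2 v)) \<and>
     (\<forall>j<K. \<forall>e<n. \<exists>m c. \<forall>v\<in>{s j..s (Suc j)}. f e v = m * v + c) \<and>
     K \<le> \<tau> + \<tau> * n * n"
proof -
  have tinc: "\<forall>i<\<tau>. tt i < tt (Suc i)" and tau1: "\<tau> \<ge> 1"
    and lin: "\<forall>k<n. \<forall>i<\<tau>. \<exists>m c. \<forall>t\<in>{tt i..tt (Suc i)}. f k t = m * t + c"
    using V unfolding valid_input_def by auto
  have ttle: "i \<le> j \<Longrightarrow> j \<le> \<tau> \<Longrightarrow> tt i \<le> tt j" for i j
    using tt_mono[OF tinc, of i j] by (cases "i = j") auto
  define a where "a = tt 0"
  define b where "b = tt \<tau>"
  define X where "X i e1 e2 = (if \<forall>v\<in>{tt i..tt (Suc i)}. f e1 v = f e2 v then {}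
      else {v\<in>{tt i..tt (Suc i)}. f e1 v = f e2 v})" for i e1 e2
  define E where "E = tt ` {..\<tau>} \<union> (\<Union>i\<in>{..<\<tau>}. \<Union>e1\<in>{..<n}. \<Union>e2\<in>{..<n}. X i e1 e2)"
  have Xsub: "\<forall>x\<in>X i e1 e2. \<forall>y\<in>X i e1 e2. x = y" if hyp: "i < \<tau>" "e1 < n" "e2 < n" for i e1 e2
  proof (intro ballI)
    fix x y assume x: "x \<in> X i e1 e2" and y: "y \<in> X i e1 e2"
    show "x = y"
    proof (rule ccontr)
      assume xy: "x \<noteq> y"
      obtain m1 c1 where mc1: "\<forall>t\<in>{tt i..tt (Suc i)}. f e1 t = m1 * t + c1" using lin hyp by blast
      obtain m2 c2 where mc2: "\<forall>t\<in>{tt i..tt (Suc i)}. f e2 t = m2 * t + c2" using lin hyp by blast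
      have ne: "\<not> (\<forall>v\<in>{tt i..tt (Suc i)}. f e1 v = f e2 v)" using x unfolding X_def by (auto split: if_splits)
      have xs: "x \<in> {tt i..tt (Suc i)}" "f e1 x = f e2 x" using x ne unfolding X_def by auto
      have ys: "y \<in> {tt i..tt (Suc i)}" "f e1 y = f e2 y" using y ne unfolding X_def by auto
      have "m1 = m2 \<and> c1 = c2"
        using lin_two_points[of m1 x c1 m2 c2 y] xs ys mc1 mc2 xy by simp
      then have "\<forall>v\<in>{tt i..tt (Suc i)}. f e1 v = f e2 v" using mc1 mc2 by simp
      then show False using ne by simp
    qed
  qed
  have Xcard: "finite (X i e1 e2) \<and> card (X i e1 e2) \<le> 1" if "i < \<tau>" "e1 < n" "e2 < n" for i e1 e2
  proof (cases "X i e1 e2 = {}")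
    case True then show ?thesis by simp
  next
    case False
    then obtain x where "x \<in> X i e1 e2" by blast
    then have "X i e1 e2 \<subseteq> {x}" using Xsub[OF that] by blast
    then have "finite (X i e1 e2)" using finite_subset by blast
    then show ?thesis using card_le_Suc0_iff_eq Xsub[OF that] by auto
  qed
  have finE: "finite E"
  proof -
    have "finite (\<Union>i\<in>{..<\<tau>}. \<Union>e1\<in>{..<n}. \<Union>e2\<in>{..<n}. X i e1 e2)"
    proof (intro finite_UN_I)
      show "finite {..<\<tau>}" "\<And>i. i \<in> {..<\<tau>} \<Longrightarrow> finite {..<n}" "\<And>i e1. i \<in> {..<\<tau>} \<Longrightarrow> e1 \<in> {..<n} \<Longrightarrow> finite {..<n}" by simp_all
      fix i e1 e2 assume "i \<in> {..<\<tau>}" "e1 \<in> {..<n}" "e2 \<in> {..<n}"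
      then show "finite (X i e1 e2)" using Xcard by simp
    qed
    then show ?thesis unfolding E_def by simp
  qed
  have cardU: "card (\<Union>i\<in>{..<\<tau>}. \<Union>e1\<in>{..<n}. \<Union>e2\<in>{..<n}. X i e1 e2) \<le> \<tau> * n * n"
  proof -
    have "card (\<Union>i\<in>{..<\<tau>}. \<Union>e1\<in>{..<n}. \<Union>e2\<in>{..<n}. X i e1 e2)
        \<le> (\<Sum>i\<in>{..<\<tau>}. card (\<Union>e1\<in>{..<n}. \<Union>e2\<in>{..<n}. X i e1 e2))" by (rule card_UN_le) simp
    also have "\<dots> \<le> (\<Sum>i\<in>{..<\<tau>}. n * n)"
    proof (rule sum_mono)
      fix i assume i: "i \<in> {..<\<tau>}"
      have "card (\<Union>e1\<in>{..<n}. \<Union>e2\<in>{..<n}. X i e1 e2) \<le> (\<Sum>e1\<in>{..<n}. card (\<Union>e2\<in>{..<n}. X i e1 e2))"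
        by (rule card_UN_le) simp
      also have "\<dots> \<le> (\<Sum>e1\<in>{..<n}. n)"
      proof (rule sum_mono)
        fix e1 assume e1: "e1 \<in> {..<n}"
        have "card (\<Union>e2\<in>{..<n}. X i e1 e2) \<le> (\<Sum>e2\<in>{..<n}. card (X i e1 e2))"
          by (rule card_UN_le) simp
        also have "\<dots> \<le> (\<Sum>e2\<in>{..<n}. 1)"
          by (rule sum_mono) (use Xcard i e1 in auto)
        finally show "card (\<Union>e2\<in>{..<n}. X i e1 e2) \<le> n" by simp
      qed
      finally show "card (\<Union>e1\<in>{..<n}. \<Union>e2\<in>{..<n}. X i e1 e2) \<le> n * n" by simp
    qed
    finally show ?thesis by simp
  qed
  have cardE: "card E \<le> Suc \<tau> + \<tau> * n * n"
  proof -
    have "card E \<le> card (tt ` {..\<tau>}) + card (\<Union>i\<in>{..<\<tau>}. \<Union>e1\<in>{..<n}. \<Union>e2\<in>{..<n}. X i e1 e2)"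
      unfolding E_def by (rule card_Un_le)
    moreover have "card (tt ` {..\<tau>}) \<le> Suc \<tau>" using card_image_le[of "{..\<tau>}" tt] by simp
    ultimately show ?thesis using cardU by linarith
  qed
  have Eab: "E \<subseteq> {a..b}"
  proof
    fix x assume "x \<in> E"
    then consider (t) i where "i \<le> \<tau>" "x = tt i" | (X) i e1 e2 where "i < \<tau>" "x \<in> X i e1 e2"
      unfolding E_def by auto
    then show "x \<in> {a..b}"
    proof cases
      case t then show ?thesis using ttle[of 0 i] ttle[of i \<tau>] unfolding a_def b_def by auto
    next
      case X
      then have "x \<in> {tt i..tt (Suc i)}" unfolding X_def by (auto split: if_splits)
      then show ?thesis using ttle[of 0 i] ttle[of "Suc i" \<tau>] X(1) unfolding a_def b_def by auto
    qed
  qed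
  have aE: "a \<in> E" "b \<in> E" unfolding E_def a_def b_def by auto
  have ttE: "i \<le> \<tau> \<Longrightarrow> tt i \<in> E" for i unfolding E_def by auto
  have XE: "i < \<tau> \<Longrightarrow> e1 < n \<Longrightarrow> e2 < n \<Longrightarrow> X i e1 e2 \<subseteq> E" for i e1 e2 unfolding E_def by blast
  define xs where "xs = sorted_list_of_set E"
  define K where "K = length xs - 1"
  define s where "s j = xs ! j" for j
  have sw: "sorted_wrt (<) xs" unfolding xs_def by simp
  have setxs: "set xs = E" unfolding xs_def using finE by simp
  have lenxs: "length xs = Suc K"
  proof -
    have "xs \<noteq> []" using setxs aE by auto
    then show ?thesis unfolding K_def by simp
  qed
  have smono: "i < j \<Longrightarrow> j \<le> K \<Longrightarrow> s i < s j" for i j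
    unfolding s_def using sorted_wrt_nth_less[OF sw, of i j] lenxs by simp
  have smono_le: "i \<le> j \<Longrightarrow> j \<le> K \<Longrightarrow> s i \<le> s j" for i j
    using smono[of i j] by (cases "i = j") auto
  have smono_iff: "i \<le> K \<Longrightarrow> j \<le> K \<Longrightarrow> s i < s j \<longleftrightarrow> i < j" for i j
    using smono[of i j] smono_le[of j i] by (cases "i < j") auto
  have inE: "x \<in> E \<Longrightarrow> \<exists>k\<le>K. x = s k" for x
  proof -
    assume "x \<in> E"
    then obtain k where "k < length xs" "x = xs ! k" using setxs by (metis in_set_conv_nth)
    then show ?thesis unfolding s_def using lenxs less_Suc_eq_le by auto
  qed
  have sE: "k \<le> K \<Longrightarrow> s k \<in> E" for k
    unfolding s_def using setxs lenxs by (metis less_Suc_eq_le nth_mem)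
  have not_between: "j < K \<Longrightarrow> x \<in> E \<Longrightarrow> s j < x \<Longrightarrow> x < s (Suc j) \<Longrightarrow> False" for j x
  proof -
    assume a: "j < K" "x \<in> E" "s j < x" "x < s (Suc j)"
    then obtain k where k: "k \<le> K" "x = s k" using inE by blast
    then show False using a smono_iff[of j k] smono_iff[of k "Suc j"] by auto
  qed
  have s0: "s 0 = a"
  proof -
    obtain k where k: "k \<le> K" "a = s k" using inE aE by blast
    have "s 0 \<le> a" using smono_le[of 0 k] k by simp
    moreover have "a \<le> s 0" using Eab sE[of 0] by auto
    ultimately show ?thesis by simp
  qed
  have sK: "s K = b"
  proof -
    obtain k where k: "k \<le> K" "b = s k" using inE aE by blast
    have "b \<le> s K" using smono_le[of k K] k by simp
    moreover have "s K \<le> b" using Eab sE[of K] by auto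
    ultimately show ?thesis by simp
  qed
  have seg: "\<exists>i<\<tau>. tt i \<le> s j \<and> s (Suc j) \<le> tt (Suc i)" if j: "j < K" for j
  proof -
    define I where "I = {i. i \<le> \<tau> \<and> tt i \<le> s j}"
    have finI: "finite I" unfolding I_def by simp
    have "0 \<in> I" unfolding I_def using s0 smono_le[of 0 j] j a_def by simp
    then have ne: "I \<noteq> {}" by auto
    define i where "i = Max I"
    have iI: "i \<in> I" unfolding i_def using finI ne by simp
    have sjb: "s j < b" using smono[of j K] j sK by simp
    have "i \<noteq> \<tau>" using iI sjb unfolding I_def b_def by auto
    then have iltau: "i < \<tau>" using iI unfolding I_def by simp
    have "Suc i \<notin> I" using Max_ge[OF finI, of "Suc i"] unfolding i_def by auto
    then have "s j < tt (Suc i)" using iltau unfolding I_def by auto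
    moreover obtain k where k: "k \<le> K" "tt (Suc i) = s k" using inE ttE[of "Suc i"] iltau by auto
    ultimately have "j < k" using smono_iff[of j k] j by simp
    then have "s (Suc j) \<le> tt (Suc i)" using smono_le[of "Suc j" k] k by simp
    then show ?thesis using iltau iI unfolding I_def by auto
  qed
  have P: "\<forall>j<K. \<forall>u\<in>{s j<..<s (Suc j)}. \<forall>e1<n. \<forall>e2<n. f e1 u = f e2 u \<longrightarrow>
             (\<forall>v\<in>{s j..s (Suc j)}. f e1 v = f e2 v)"
  proof (intro allI impI ballI)
    fix j u e1 e2 v
    assume j: "j < K" and u: "u \<in> {s j<..<s (Suc j)}" and e: "e1 < n" "e2 < n"
      and eq: "f e1 u = f e2 u" and v: "v \<in> {s j..s (Suc j)}"
    obtain i where i: "i < \<tau>" "tt i \<le> s j" "s (Suc j) \<le> tt (Suc i)" using seg[OF j] by blast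
    show "f e1 v = f e2 v"
    proof (cases "\<forall>v\<in>{tt i..tt (Suc i)}. f e1 v = f e2 v")
      case True then show ?thesis using v i by auto
    next
      case False
      then have "u \<in> X i e1 e2" unfolding X_def using u i eq by auto
      then have "u \<in> E" using XE[OF i(1) e] by blast
      then show ?thesis using not_between[OF j] u by auto
    qed
  qed
  have L: "\<forall>j<K. \<forall>e<n. \<exists>m c. \<forall>v\<in>{s j..s (Suc j)}. f e v = m * v + c"
  proof (intro allI impI)
    fix j e assume j: "j < K" and e: "e < n"
    obtain i where i: "i < \<tau>" "tt i \<le> s j" "s (Suc j) \<le> tt (Suc i)" using seg[OF j] by blast
    obtain m c where "\<forall>t\<in>{tt i..tt (Suc i)}. f e t = m * t + c" using lin e i by blast
    then have "\<forall>v\<in>{s j..s (Suc j)}. f e v = m * v + c" using i by auto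
    then show "\<exists>m c. \<forall>v\<in>{s j..s (Suc j)}. f e v = m * v + c" by blast
  qed
  have Kb: "K \<le> \<tau> + \<tau> * n * n"
  proof -
    have "length xs = card E" unfolding xs_def by simp
    then show ?thesis using cardE lenxs by simp
  qed
  have inc: "\<forall>j<K. s j < s (Suc j)" using smono by simp
  show ?thesis
    apply (rule exI[of _ K], rule exI[of _ s])
    using s0 sK inc P L Kb unfolding a_def b_def by blast
qed


theorem mainTheorem17:
  shows "\<exists>C::real. \<forall>n \<tau> (tt::nat \<Rightarrow> real) (f::nat \<Rightarrow> real \<Rightarrow> real).
           valid_input n \<tau> tt f \<longrightarrow>
           (\<exists>T. central_trajectory n (tt 0) (tt \<tau>) f T \<and>
                (\<exists>k. complexity_le (tt 0) (tt \<tau>) f T k \<and> real k \<le> C * real \<tau> * (real n)^2))"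
proof (rule exI[of _ 2], intro allI impI)
  fix n \<tau> and tt :: "nat \<Rightarrow> real" and f :: "nat \<Rightarrow> real \<Rightarrow> real"
  assume V: "valid_input n \<tau> tt f"
  have n1: "n \<ge> 1" and t1: "\<tau> \<ge> 1" using V unfolding valid_input_def by auto
  obtain K s where s0: "s 0 = tt 0" and sK: "s K = tt \<tau>" and inc: "\<forall>j<K. s j < s (Suc j)"
    and P: "\<forall>j<K. \<forall>u\<in>{s j<..<s (Suc j)}. \<forall>e1<n. \<forall>e2<n. f e1 u = f e2 u \<longrightarrow>
             (\<forall>v\<in>{s j..s (Suc j)}. f e1 v = f e2 v)"
    and L: "\<forall>j<K. \<forall>e<n. \<exists>m c. \<forall>v\<in>{s j..s (Suc j)}. f e v = m * v + c"
    and Kb: "K \<le> \<tau> + \<tau> * n * n"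
    using concrete[OF V] by blast
  obtain T where T: "central_trajectory n (tt 0) (tt \<tau>) f T" "complexity_le (tt 0) (tt \<tau>) f T K"
    using abstract_main[OF n1 s0 sK inc P L] by blast
  have "1 * 1 \<le> n * n" using n1 by (intro mult_mono) auto
  then have "\<tau> * 1 \<le> \<tau> * (n * n)" by (intro mult_le_mono2) simp
  then have h1: "\<tau> \<le> \<tau> * (n * n)" by simp
  have h2: "2 * \<tau> * n * n = \<tau> * (n * n) + \<tau> * (n * n)" by (simp add: algebra_simps)
  have h3: "\<tau> + \<tau> * n * n = \<tau> + \<tau> * (n * n)" by (simp add: algebra_simps)
  have "K \<le> 2 * \<tau> * n * n" using Kb h1 h2 h3 by linarith
  then have "real K \<le> real (2 * \<tau> * n * n)" by (simp only: of_nat_le_iff)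
  then have "real K \<le> 2 * real \<tau> * (real n)^2" by (simp add: power2_eq_square)
  then show "\<exists>T. central_trajectory n (tt 0) (tt \<tau>) f T \<and>
                (\<exists>k. complexity_le (tt 0) (tt \<tau>) f T k \<and> real k \<le> 2 * real \<tau> * (real n)^2)"
    using T by blast
qed

end
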